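(* $\mathcal{S}$ is a separating class for $SG(\mathbb{R})$: for every $f\in SG(\mathbb{R})$ and every $\phi\in\mathcal{S}$ the function $f\phi$ is piecewise continuous and absolutely integrable on $\mathbb{R}$, and if $f,g\in SG(\mathbb{R})$ satisfy $\int_{-\infty}^\infty f(x)\phi(x)\,dx=\int_{-\infty}^\infty g(x)\phi(x)\,dx$ for all $\phi\in\mathcal{S}$, then $f(x)=g(x)$ for all $x\in\mathbb{R}$.
   Context: A function $f:\mathbb{R}\to\mathbb{C}$ is piecewise continuous if on each bounded subinterval it is continuous except at finitely many points, at which it has finite one-sided limits. $PC_{bj}$ is the set of piecewise continuous $f:\mathbb{R}\to\mathbb{C}$ satisfying $f(x)=\tfrac12\big(f(x+)+f(x-)\big)$ for every $x\in\mathbb{R}$. $SG(\mathbb{R})$ is the set of $f\in PC_{bj}$ for which there exist constants $C>0$ and $N\in\mathbb{N}$ with $\int_{-R}^{R}|f(x)|\,dx\le C(1+R)^N$ for all $R>0$. $\mathcal{S}$ (the Schwartz class) is the set of infinitely differentiable $\phi:\mathbb{R}\to\mathbb{C}$ with $\lim_{x\to\pm\infty}x^m\phi^{(n)}(x)=0$ for all integers $m,n\ge 0$. *)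

theory Defs
  imports "HOL-Analysis.Analysis"
begin

definition piecewise_cont :: "(real \<Rightarrow> complex) \<Rightarrow> bool" where
  "piecewise_cont f \<longleftrightarrow>
     (\<forall>a b. \<exists>D. finite D \<and> D \<subseteq> {a..b} \<and>
        (\<forall>x\<in>{a..b} - D. isCont f x) \<and>
        (\<forall>x\<in>D. (\<exists>l. (f \<longlongrightarrow> l) (at_left x)) \<and> (\<exists>l. (f \<longlongrightarrow> l) (at_right x))))"

definition PC_bj :: "(real \<Rightarrow> complex) set" where
  "PC_bj = {f. piecewise_cont f \<and>
      (\<forall>x. f x = (Lim (at_right x) f + Lim (at_left x) f) / 2)}"

definition SG :: "(real \<Rightarrow> complex) set" where
  "SG = {f. f \<in> PC_bj \<and>
      (\<exists>C>0. \<exists>N::nat. \<forall>R>0. integral {-R..R} (\<lambda>x. norm (f x)) \<le> C * (1 + R) ^ N)}"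

definition nderiv :: "nat \<Rightarrow> (real \<Rightarrow> complex) \<Rightarrow> real \<Rightarrow> complex" where
  "nderiv n = ((\<lambda>g x. vector_derivative g (at x)) ^^ n)"

definition Schwartz :: "(real \<Rightarrow> complex) set" where
  "Schwartz = {\<phi>. (\<forall>n x. nderiv n \<phi> differentiable (at x)) \<and>
      (\<forall>m n. ((\<lambda>x. complex_of_real (x ^ m) * nderiv n \<phi> x) \<longlongrightarrow> 0) at_top \<and>
             ((\<lambda>x. complex_of_real (x ^ m) * nderiv n \<phi> x) \<longlongrightarrow> 0) at_bot)}"

end

theory Submission
  imports Defs "HOL-Computational_Algebra.Polynomial" "HOL-Probability.Distributions" "HOL-Real_Asymp.Real_Asymp"
begin


lemma pc_D:
  assumes "piecewise_cont f"
  obtains D where "finite D" "D \<subseteq> {a..b}" "\<forall>x\<in>{a..b} - D. isCont f x"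
    "\<forall>x\<in>D. (\<exists>l. (f \<longlongrightarrow> l) (at_left x)) \<and> (\<exists>l. (f \<longlongrightarrow> l) (at_right x))"
proof -
  have "\<exists>D. finite D \<and> D \<subseteq> {a..b} \<and> (\<forall>x\<in>{a..b} - D. isCont f x) \<and>
        (\<forall>x\<in>D. (\<exists>l. (f \<longlongrightarrow> l) (at_left x)) \<and> (\<exists>l. (f \<longlongrightarrow> l) (at_right x)))"
    using assms unfolding piecewise_cont_def by (rule spec[where x=b, OF spec[where x=a]])
  then obtain D where "finite D \<and> D \<subseteq> {a..b} \<and> (\<forall>x\<in>{a..b} - D. isCont f x) \<and>
        (\<forall>x\<in>D. (\<exists>l. (f \<longlongrightarrow> l) (at_left x)) \<and> (\<exists>l. (f \<longlongrightarrow> l) (at_right x)))"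
    by (rule exE)
  then show ?thesis using that by (elim conjE)
qed


lemma pc_right_lim:
  assumes "piecewise_cont f" shows "\<exists>l. (f \<longlongrightarrow> l) (at_right x)"
proof -
  obtain D where D: "finite D" "D \<subseteq> {x..x}" "\<forall>y\<in>{x..x} - D. isCont f y"
    "\<forall>y\<in>D. (\<exists>l. (f \<longlongrightarrow> l) (at_left y)) \<and> (\<exists>l. (f \<longlongrightarrow> l) (at_right y))"
    using pc_D[OF assms, of x x] by metis
  show ?thesis
  proof (cases "x \<in> D")
    case True then show ?thesis using D(4) by simp
  next
    case False
    then have "isCont f x" using D(3) by simp
    then have "continuous (at_right x) f" using continuous_at_split by blast
    then have "(f \<longlongrightarrow> f x) (at_right x)" by (simp add: continuous_within)
    then show ?thesis by (rule exI)
  qed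
qed

lemma pc_left_lim:
  assumes "piecewise_cont f" shows "\<exists>l. (f \<longlongrightarrow> l) (at_left x)"
proof -
  obtain D where D: "finite D" "D \<subseteq> {x..x}" "\<forall>y\<in>{x..x} - D. isCont f y"
    "\<forall>y\<in>D. (\<exists>l. (f \<longlongrightarrow> l) (at_left y)) \<and> (\<exists>l. (f \<longlongrightarrow> l) (at_right y))"
    using pc_D[OF assms, of x x] by metis
  show ?thesis
  proof (cases "x \<in> D")
    case True then show ?thesis using D(4) by simp
  next
    case False
    then have "isCont f x" using D(3) by simp
    then have "continuous (at_left x) f" using continuous_at_split by blast
    then have "(f \<longlongrightarrow> f x) (at_left x)" by (simp add: continuous_within)
    then show ?thesis by (rule exI)
  qed
qed

lemma pc_local_bound:
  assumes "piecewise_cont f"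
  shows "\<exists>r>0. \<exists>B. \<forall>t\<in>ball x r. norm (f t) \<le> B"
proof -
  obtain lp where lp: "(f \<longlongrightarrow> lp) (at_right x)" using pc_right_lim[OF assms, of x] by (elim exE)
  obtain lm where lm: "(f \<longlongrightarrow> lm) (at_left x)" using pc_left_lim[OF assms, of x] by (elim exE)
  have "eventually (\<lambda>t. dist (f t) lp < 1) (at_right x)"
    using lp by (rule tendstoD) simp
  then obtain b1 where b1: "b1 > x" "\<And>t. t > x \<Longrightarrow> t < b1 \<Longrightarrow> dist (f t) lp < 1"
    unfolding eventually_at_right_field by (elim exE conjE) auto
  have "eventually (\<lambda>t. dist (f t) lm < 1) (at_left x)"
    using lm by (rule tendstoD) simp
  then obtain b2 where b2: "b2 < x" "\<And>t. t > b2 \<Longrightarrow> t < x \<Longrightarrow> dist (f t) lm < 1"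
    unfolding eventually_at_left_field by (elim exE conjE) auto
  define r where "r = min (b1 - x) (x - b2)"
  have "r > 0" using b1 b2 r_def by auto
  moreover have "\<forall>t\<in>ball x r. norm (f t) \<le> norm lp + norm lm + norm (f x) + 1"
  proof
    fix t assume t: "t \<in> ball x r"
    then have td: "\<bar>t - x\<bar> < r" by (simp add: dist_real_def abs_minus_commute)
    consider "t > x" | "t < x" | "t = x" by linarith
    then show "norm (f t) \<le> norm lp + norm lm + norm (f x) + 1"
    proof cases
      case 1
      then have "t < b1" using td r_def by linarith
      then have "dist (f t) lp < 1" using b1 1 by auto
      then have "norm (f t) < norm lp + 1" using norm_triangle_ineq2[of "f t" lp]
        by (simp add: dist_norm)
      then show ?thesis by (smt (verit) norm_ge_zero)
    next
      case 2
      then have "t > b2" using td r_def by linarith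
      then have "dist (f t) lm < 1" using b2 2 by auto
      then have "norm (f t) < norm lm + 1" using norm_triangle_ineq2[of "f t" lm]
        by (simp add: dist_norm)
      then show ?thesis by (smt (verit) norm_ge_zero)
    next
      case 3 then show ?thesis by (smt (verit) norm_ge_zero)
    qed
  qed
  ultimately show ?thesis by blast
qed

lemma pc_bounded:
  assumes "piecewise_cont f"
  shows "\<exists>B. \<forall>t\<in>{a..b}. norm (f t) \<le> B"
proof -
  have ex: "\<forall>x. \<exists>p. fst p > 0 \<and> (\<forall>t\<in>ball x (fst p). norm (f t) \<le> snd p)"
  proof
    fix x
    obtain r B where "r > 0" "\<forall>t\<in>ball x r. norm (f t) \<le> B"
      using pc_local_bound[OF assms, of x] by (elim exE conjE)
    then show "\<exists>p. fst p > 0 \<and> (\<forall>t\<in>ball x (fst p). norm (f t) \<le> snd p)"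
      by (intro exI[of _ "(r, B)"]) simp
  qed
  obtain P where P: "\<forall>x. fst (P x) > 0 \<and> (\<forall>t\<in>ball x (fst (P x)). norm (f t) \<le> snd (P x))"
    using choice[OF ex] by (elim exE)
  define r where "r = (\<lambda>x. fst (P x))"
  define B where "B = (\<lambda>x. snd (P x))"
  have r: "\<And>x. r x > 0" using P r_def by simp
  have B: "\<And>x t. t \<in> ball x (r x) \<Longrightarrow> norm (f t) \<le> B x" using P r_def B_def by simp
  have "{a..b} \<subseteq> (\<Union>c\<in>{a..b}. ball c (r c))"
  proof
    fix t assume "t \<in> {a..b}"
    moreover have "t \<in> ball t (r t)" using r[of t] by simp
    ultimately show "t \<in> (\<Union>c\<in>{a..b}. ball c (r c))" by blast
  qed
  then obtain C where C: "C \<subseteq> {a..b}" "finite C" "{a..b} \<subseteq> (\<Union>c\<in>C. ball c (r c))"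
    using compactE_image[of "{a..b}" "{a..b}" "\<lambda>c. ball c (r c)"] compact_Icc by blast
  show ?thesis
  proof (intro exI ballI)
    fix t assume "t \<in> {a..b}"
    then obtain c where c: "c \<in> C" "t \<in> ball c (r c)" using C by blast
    then have "norm (f t) \<le> B c" using B by blast
    also have "\<dots> \<le> \<bar>B c\<bar>" by simp
    also have "\<dots> \<le> (\<Sum>c\<in>C. \<bar>B c\<bar>)"
      by (rule member_le_sum) (use c C(2) in auto)
    finally show "norm (f t) \<le> (\<Sum>c\<in>C. \<bar>B c\<bar>)" .
  qed
qed

lemma pc_absint:
  assumes "piecewise_cont f"
  shows "f absolutely_integrable_on {a..b}"
proof -
  obtain D where D: "finite D" "D \<subseteq> {a..b}" "\<forall>y\<in>{a..b} - D. isCont f y"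
    "\<forall>x\<in>D. (\<exists>l. (f \<longlongrightarrow> l) (at_left x)) \<and> (\<exists>l. (f \<longlongrightarrow> l) (at_right x))"
    by (rule pc_D[OF assms])
  have c: "continuous_on ({a..b} - D) f"
    by (rule continuous_at_imp_continuous_on) (use D(3) in blast)
  have s: "{a..b} - D \<in> sets lebesgue"
  proof (rule sets.Diff)
    show "{a..b} \<in> sets lebesgue" by simp
    show "D \<in> sets lebesgue" using D(1) by (intro negligible_imp_sets negligible_finite)
  qed
  have m1: "f \<in> borel_measurable (lebesgue_on ({a..b} - D))"
    by (rule continuous_imp_measurable_on_sets_lebesgue[OF c s])
  have m2: "f measurable_on ({a..b} - D)"
    using measurable_on_iff_borel_measurable[OF s, of f] m1 by (rule iffD2)
  have ng: "negligible (({a..b} - D - {a..b}) \<union> ({a..b} - ({a..b} - D)))"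
    by (rule negligible_subset[of D]) (use D(1) in \<open>auto intro: negligible_finite\<close>)
  have m3: "f measurable_on {a..b}"
    by (rule measurable_on_spike_set[OF m2 ng])
  have m: "f \<in> borel_measurable (lebesgue_on {a..b})"
    using measurable_on_iff_borel_measurable[of "{a..b}" f] m3 by simp
  obtain B where B: "\<forall>t\<in>{a..b}. norm (f t) \<le> B" using pc_bounded[OF assms, of a b] by (elim exE)
  have gi: "(\<lambda>_. B) integrable_on {a..b}" by (rule integrable_on_const) simp
  show ?thesis
    by (rule measurable_bounded_by_integrable_imp_absolutely_integrable[OF m _ gi]) (use B in auto)
qed


lemma nderiv_0 [simp]: "nderiv 0 \<phi> = \<phi>"
  by (simp add: nderiv_def)

lemma nderiv_Suc: "nderiv (Suc n) \<phi> = (\<lambda>x. vector_derivative (nderiv n \<phi>) (at x))"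
  by (simp add: nderiv_def)

lemma schwartz_isCont:
  assumes "\<phi> \<in> Schwartz" shows "isCont \<phi> x"
proof -
  have "nderiv 0 \<phi> differentiable (at x)" using assms unfolding Schwartz_def by blast
  then have "\<phi> differentiable (at x)" by simp
  then show ?thesis by (rule differentiable_imp_continuous_within)
qed

lemma schwartz_lim:
  assumes "\<phi> \<in> Schwartz"
  shows "((\<lambda>x. complex_of_real (x ^ m) * \<phi> x) \<longlongrightarrow> 0) at_top"
    "((\<lambda>x. complex_of_real (x ^ m) * \<phi> x) \<longlongrightarrow> 0) at_bot"
proof -
  have "((\<lambda>x. complex_of_real (x ^ m) * nderiv 0 \<phi> x) \<longlongrightarrow> 0) at_top \<and>
        ((\<lambda>x. complex_of_real (x ^ m) * nderiv 0 \<phi> x) \<longlongrightarrow> 0) at_bot"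
    using assms unfolding Schwartz_def by blast
  then show "((\<lambda>x. complex_of_real (x ^ m) * \<phi> x) \<longlongrightarrow> 0) at_top"
    "((\<lambda>x. complex_of_real (x ^ m) * \<phi> x) \<longlongrightarrow> 0) at_bot" by simp_all
qed

lemma cont_lim_bounded:
  fixes g :: "real \<Rightarrow> complex"
  assumes c: "\<And>x. isCont g x" and t: "(g \<longlongrightarrow> 0) at_top" and b: "(g \<longlongrightarrow> 0) at_bot"
  shows "\<exists>B. \<forall>t. norm (g t) \<le> B"
proof -
  have "eventually (\<lambda>x. dist (g x) 0 < 1) at_top" using t by (rule tendstoD) simp
  then obtain T1 where T1: "\<And>x. x \<ge> T1 \<Longrightarrow> dist (g x) 0 < 1"
    unfolding eventually_at_top_linorder by (elim exE) auto
  have "eventually (\<lambda>x. dist (g x) 0 < 1) at_bot" using b by (rule tendstoD) simp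
  then obtain T2 where T2: "\<And>x. x \<le> T2 \<Longrightarrow> dist (g x) 0 < 1"
    unfolding eventually_at_bot_linorder by (elim exE) auto
  have "continuous_on {T2..T1} g" by (rule continuous_at_imp_continuous_on) (use c in blast)
  then have "compact (g ` {T2..T1})" by (rule compact_continuous_image) simp
  then have "bounded (g ` {T2..T1})" by (rule compact_imp_bounded)
  then obtain K where K: "\<And>x. x \<in> {T2..T1} \<Longrightarrow> norm (g x) \<le> K"
    unfolding bounded_iff by blast
  show ?thesis
  proof (intro exI allI)
    fix x
    consider "x \<ge> T1" | "x \<le> T2" | "x \<in> {T2..T1}" by fastforce
    then show "norm (g x) \<le> max K 1"
    proof cases
      case 1 then show ?thesis using T1[of x] by (simp add: dist_norm)
    next
      case 2 then show ?thesis using T2[of x] by (simp add: dist_norm)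
    next
      case 3 then show ?thesis using K[of x] by simp
    qed
  qed
qed

lemma one_plus_abs_pow_le: "(1 + \<bar>t::real\<bar>) ^ M \<le> 2 ^ M * (1 + \<bar>t\<bar> ^ M)"
proof (cases "\<bar>t\<bar> \<le> 1")
  case True
  then have "(1 + \<bar>t\<bar>) ^ M \<le> 2 ^ M" by (intro power_mono) auto
  also have "\<dots> \<le> 2 ^ M * (1 + \<bar>t\<bar> ^ M)" by simp
  finally show ?thesis .
next
  case False
  then have "(1 + \<bar>t\<bar>) ^ M \<le> (2 * \<bar>t\<bar>) ^ M" by (intro power_mono) auto
  also have "\<dots> = 2 ^ M * \<bar>t\<bar> ^ M" by (simp add: power_mult_distrib)
  also have "\<dots> \<le> 2 ^ M * (1 + \<bar>t\<bar> ^ M)" by simp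
  finally show ?thesis .
qed

lemma schwartz_poly_bound:
  assumes "\<phi> \<in> Schwartz"
  shows "\<exists>B. \<forall>t. (1 + \<bar>t\<bar>) ^ M * norm (\<phi> t) \<le> B"
proof -
  have c: "isCont \<phi> x" for x using schwartz_isCont[OF assms] .
  have c2: "isCont (\<lambda>x. complex_of_real (x ^ M) * \<phi> x) x" for x
    by (intro continuous_intros c)
  obtain B0 where B0: "\<And>t. norm (\<phi> t) \<le> B0"
  proof -
    have "((\<lambda>x. complex_of_real (x ^ 0) * \<phi> x) \<longlongrightarrow> 0) at_top"
         "((\<lambda>x. complex_of_real (x ^ 0) * \<phi> x) \<longlongrightarrow> 0) at_bot"
      using schwartz_lim[OF assms, of 0] by auto
    then have "(\<phi> \<longlongrightarrow> 0) at_top" "(\<phi> \<longlongrightarrow> 0) at_bot" by simp_all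
    then show ?thesis using cont_lim_bounded[OF c] that by blast
  qed
  obtain BM where BM: "\<And>t. norm (complex_of_real (t ^ M) * \<phi> t) \<le> BM"
    using cont_lim_bounded[OF c2 schwartz_lim[OF assms]] by blast
  show ?thesis
  proof (intro exI allI)
    fix t
    have "(1 + \<bar>t\<bar>) ^ M * norm (\<phi> t) \<le> 2 ^ M * (1 + \<bar>t\<bar> ^ M) * norm (\<phi> t)"
      by (intro mult_right_mono one_plus_abs_pow_le) simp
    also have "\<dots> = 2 ^ M * (norm (\<phi> t) + norm (complex_of_real (t ^ M) * \<phi> t))"
      by (simp add: norm_mult power_abs algebra_simps norm_power del: of_real_power)
    also have "\<dots> \<le> 2 ^ M * (B0 + BM)"
      using B0[of t] BM[of t] by (intro mult_left_mono) auto
    finally show "(1 + \<bar>t\<bar>) ^ M * norm (\<phi> t) \<le> 2 ^ M * (B0 + BM)" .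
  qed
qed

lemma pc_mult_cont:
  assumes pc: "piecewise_cont f" and c: "\<And>x. isCont \<phi> x"
  shows "piecewise_cont (\<lambda>x. f x * \<phi> x)"
  unfolding piecewise_cont_def
proof (intro allI)
  fix a b
  obtain D where D: "finite D" "D \<subseteq> {a..b}" "\<forall>y\<in>{a..b} - D. isCont f y"
    "\<forall>x\<in>D. (\<exists>l. (f \<longlongrightarrow> l) (at_left x)) \<and> (\<exists>l. (f \<longlongrightarrow> l) (at_right x))"
    by (rule pc_D[OF pc])
  have 1: "\<forall>y\<in>{a..b} - D. isCont (\<lambda>x. f x * \<phi> x) y"
  proof
    fix y assume "y \<in> {a..b} - D"
    then have "isCont f y" using D(3) by blast
    then show "isCont (\<lambda>x. f x * \<phi> x) y" using c[of y] by (rule isCont_mult)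
  qed
  have 2: "\<forall>x\<in>D. (\<exists>l. ((\<lambda>x. f x * \<phi> x) \<longlongrightarrow> l) (at_left x)) \<and>
                  (\<exists>l. ((\<lambda>x. f x * \<phi> x) \<longlongrightarrow> l) (at_right x))"
  proof
    fix x assume "x \<in> D"
    then obtain l1 l2 where l1: "(f \<longlongrightarrow> l1) (at_left x)" and l2: "(f \<longlongrightarrow> l2) (at_right x)"
      using D(4) by blast
    have "continuous (at_left x) \<phi>" "continuous (at_right x) \<phi>"
      using c[of x] continuous_at_split by blast+
    then have p1: "(\<phi> \<longlongrightarrow> \<phi> x) (at_left x)" and p2: "(\<phi> \<longlongrightarrow> \<phi> x) (at_right x)"
      by (simp_all add: continuous_within)
    have "((\<lambda>x. f x * \<phi> x) \<longlongrightarrow> l1 * \<phi> x) (at_left x)" by (rule tendsto_mult[OF l1 p1])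
    moreover have "((\<lambda>x. f x * \<phi> x) \<longlongrightarrow> l2 * \<phi> x) (at_right x)" by (rule tendsto_mult[OF l2 p2])
    ultimately show "(\<exists>l. ((\<lambda>x. f x * \<phi> x) \<longlongrightarrow> l) (at_left x)) \<and>
                  (\<exists>l. ((\<lambda>x. f x * \<phi> x) \<longlongrightarrow> l) (at_right x))" by blast
  qed
  show "\<exists>D. finite D \<and> D \<subseteq> {a..b} \<and> (\<forall>x\<in>{a..b} - D. isCont (\<lambda>x. f x * \<phi> x) x) \<and>
        (\<forall>x\<in>D. (\<exists>l. ((\<lambda>x. f x * \<phi> x) \<longlongrightarrow> l) (at_left x)) \<and>
                  (\<exists>l. ((\<lambda>x. f x * \<phi> x) \<longlongrightarrow> l) (at_right x)))"
    using D(1,2) 1 2 by blast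
qed


lemma aux_alg:
  fixes q B C :: real assumes "q > 0"
  shows "B / (q ^ N * q ^ 2) * (C * (2 ^ N * q ^ N)) = B * C * 2 ^ N / q ^ 2"
  using assms by (simp add: field_simps)

lemma aux_frac:
  fixes K q :: real assumes "K \<ge> 0" "q \<ge> 1"
  shows "K / q ^ 2 \<le> 2 * K / (q * (q + 1))"
proof -
  have "K / q ^ 2 = (2 * K) / (2 * q ^ 2)" by simp
  also have "\<dots> \<le> 2 * K / (q * (q + 1))"
  proof (rule divide_left_mono)
    show "q * (q + 1) \<le> 2 * q ^ 2" using assms by (simp add: power2_eq_square algebra_simps)
    show "0 \<le> 2 * K" using assms by simp
    show "0 < 2 * q ^ 2 * (q * (q + 1))" using assms by simp
  qed
  finally show ?thesis .
qed

lemma part1_absint: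
  fixes f \<phi> :: "real \<Rightarrow> complex"
  assumes pc: "piecewise_cont f"
    and bnd: "\<forall>R>0. integral {-R..R} (\<lambda>x. norm (f x)) \<le> C * (1 + R) ^ N"
    and phi: "\<phi> \<in> Schwartz"
  shows "(\<lambda>x. f x * \<phi> x) absolutely_integrable_on UNIV"
proof -
  define F where "F = (\<lambda>x. f x * \<phi> x)"
  have pcF: "piecewise_cont F" unfolding F_def
    by (rule pc_mult_cont[OF pc schwartz_isCont[OF phi]])
  obtain B where B: "\<And>t. (1 + \<bar>t\<bar>) ^ (N + 2) * norm (\<phi> t) \<le> B"
    using schwartz_poly_bound[OF phi, of "N + 2"] by (elim exE) auto
  have B0: "B \<ge> 0" using B[of 0] by (smt (verit) mult_nonneg_nonneg norm_ge_zero zero_le_power)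
  have intF: "F absolutely_integrable_on {a..b}" for a b by (rule pc_absint[OF pcF])
  then have intnF: "(\<lambda>t. norm (F t)) integrable_on {a..b}" for a b
    using absolutely_integrable_on_def by blast
  have intnf: "(\<lambda>t. norm (f t)) integrable_on {a..b}" for a b
    using pc_absint[OF pc] absolutely_integrable_on_def by blast
  define I where "I = (\<lambda>k::nat. integral {- real k..real k} (\<lambda>t. norm (F t)))"
  define K where "K = B * C * 2 ^ N"
  have Ik0: "I k \<ge> 0" for k unfolding I_def by (rule integral_nonneg[OF intnF]) simp
  have C0: "C \<ge> 0"
  proof -
    have "0 \<le> integral {-1..1} (\<lambda>x. norm (f x))" by (rule integral_nonneg[OF intnf]) simp
    also have "\<dots> \<le> C * (1 + 1) ^ N" using bnd[rule_format, of 1] by simp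
    finally have "0 \<le> C * 2 ^ N" by simp
    moreover have "(0::real) < 2 ^ N" by simp
    ultimately show ?thesis by (simp add: zero_le_mult_iff)
  qed
  have step: "I (Suc k) \<le> I k + K / (real k + 1) ^ 2" for k
  proof -
    define w where "w = B / (real k + 1) ^ (N + 2)"
    have w0: "w \<ge> 0" using B0 by (simp add: w_def)
    let ?S = "{- real (Suc k)..real (Suc k)}"
    have pt: "norm (F t) \<le> (if t \<in> {- real k..real k} then norm (F t) else 0) + w * norm (f t)"
      for t
    proof (cases "t \<in> {- real k..real k}")
      case True then show ?thesis using w0 by simp
    next
      case False
      then have tk: "\<bar>t\<bar> \<ge> real k + 1 - 1" by auto
      have pos: "(real k + 1) ^ (N + 2) > 0" by simp
      have "(real k + 1) ^ (N + 2) \<le> (1 + \<bar>t\<bar>) ^ (N + 2)"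
        using tk by (intro power_mono) auto
      then have "(real k + 1) ^ (N + 2) * norm (\<phi> t) \<le> B"
        using B[of t] by (smt (verit) mult_right_mono norm_ge_zero)
      then have "norm (\<phi> t) \<le> w" unfolding w_def using pos by (simp add: field_simps)
      then have "norm (F t) \<le> w * norm (f t)"
        unfolding F_def norm_mult by (simp add: mult.commute mult_right_mono)
      then show ?thesis using False by (simp only: if_False)
    qed
    have eqI: "{- real k..real k} \<inter> ?S = {- real k..real k}" by auto
    have i1: "(\<lambda>t. if t \<in> {- real k..real k} then norm (F t) else 0) integrable_on ?S"
      unfolding integrable_restrict_Int eqI by (rule intnF)
    have i2: "(\<lambda>t. w * norm (f t)) integrable_on ?S"
      by (rule integrable_on_mult_right[OF intnf])
    have J: "integral ?S (\<lambda>t. norm (f t)) \<le> C * (real k + 2) ^ N"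
    proof -
      have "integral ?S (\<lambda>t. norm (f t)) \<le> C * (1 + real (Suc k)) ^ N"
        using bnd[rule_format, of "real (Suc k)"] by simp
      then show ?thesis by (simp add: add.commute)
    qed
    have wJ: "w * integral ?S (\<lambda>t. norm (f t)) \<le> K / (real k + 1) ^ 2"
    proof -
      have p: "(real k + 2) ^ N \<le> 2 ^ N * (real k + 1) ^ N"
      proof -
        have "(real k + 2) ^ N \<le> (2 * (real k + 1)) ^ N" by (intro power_mono) auto
        also have "\<dots> = 2 ^ N * (real k + 1) ^ N" by (rule power_mult_distrib)
        finally show ?thesis .
      qed
      have "w * integral ?S (\<lambda>t. norm (f t)) \<le> w * (C * (real k + 2) ^ N)"
        using J w0 by (rule mult_left_mono)
      also from p have "w * (C * (real k + 2) ^ N) \<le> w * (C * (2 ^ N * (real k + 1) ^ N))"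
        using w0 C0 by (intro mult_left_mono) auto
      also have "\<dots> = K / (real k + 1) ^ 2"
        unfolding w_def K_def power_add using aux_alg[where q="real k + 1" and B=B and C=C and N=N] by simp
      finally show ?thesis .
    qed
    have "I (Suc k) \<le> integral ?S (\<lambda>t. (if t \<in> {- real k..real k} then norm (F t) else 0) + w * norm (f t))"
      unfolding I_def by (rule integral_le[OF intnF integrable_add[OF i1 i2]]) (use pt in auto)
    also have "\<dots> = integral ?S (\<lambda>t. if t \<in> {- real k..real k} then norm (F t) else 0) +
                    integral ?S (\<lambda>t. w * norm (f t))"
      by (rule integral_add[OF i1 i2])
    also have "integral ?S (\<lambda>t. if t \<in> {- real k..real k} then norm (F t) else 0) = I k"
      unfolding I_def integral_restrict_Int eqI ..
    also have "integral ?S (\<lambda>t. w * norm (f t)) = w * integral ?S (\<lambda>t. norm (f t))"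
      by simp
    finally show ?thesis using wJ by simp
  qed
  have K0: "K \<ge> 0" unfolding K_def using B0 C0 by simp
  have inv: "I k \<le> 2 * K - 2 * K / (real k + 1)" for k
  proof (induction k)
    case 0 then show ?case unfolding I_def by simp
  next
    case (Suc k)
    have "I (Suc k) \<le> 2 * K - 2 * K / (real k + 1) + K / (real k + 1) ^ 2"
      using step[of k] Suc by simp
    also have "\<dots> \<le> 2 * K - 2 * K / (real (Suc k) + 1)"
    proof -
      have "K / (real k + 1) ^ 2 \<le> 2 * K / (real k + 1) - 2 * K / (real k + 2)"
      proof -
        have "2 * K / (real k + 1) - 2 * K / (real k + 2) = 2 * K / ((real k + 1) * (real k + 2))"
          by (simp add: field_simps)
        moreover have "K / (real k + 1) ^ 2 \<le> 2 * K / ((real k + 1) * (real k + 2))"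
          using aux_frac[of K "real k + 1"] K0 by (simp add: add.commute add.left_commute)
        ultimately show ?thesis by simp
      qed
      then show ?thesis by (simp add: add.commute)
    qed
    finally show ?case .
  qed
  have Ib: "I k \<le> 2 * K" for k
    using inv[of k] K0 by (smt (verit) divide_nonneg_nonneg of_nat_0_le_iff)
  define g where "g = (\<lambda>k::nat. \<lambda>t. if t \<in> {- real k..real k} then norm (F t) else 0)"
  have lim_ev: "eventually (\<lambda>k. t \<in> {- real k..real k}) sequentially" for t :: real
  proof -
    obtain n :: nat where "\<bar>t\<bar> \<le> real n" using real_arch_simple by blast
    then show ?thesis unfolding eventually_sequentially
      by (intro exI[of _ n]) auto
  qed
  have mc: "(\<lambda>t. norm (F t)) integrable_on UNIV \<and>
      ((\<lambda>k. integral UNIV (g k)) \<longlongrightarrow> integral UNIV (\<lambda>t. norm (F t))) sequentially"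
  proof (rule monotone_convergence_increasing)
    show "g k integrable_on UNIV" for k
      unfolding g_def integrable_restrict_UNIV by (rule intnF)
    show "g k t \<le> g (Suc k) t" for k t
      unfolding g_def by auto
    show "((\<lambda>k. g k t) \<longlongrightarrow> norm (F t)) sequentially" for t
    proof (rule tendsto_eventually)
      show "eventually (\<lambda>k. g k t = norm (F t)) sequentially"
        using lim_ev[of t] by eventually_elim (simp add: g_def)
    qed
    show "bounded (range (\<lambda>k. integral UNIV (g k)))"
    proof -
      have "integral UNIV (g k) = I k" for k
        unfolding g_def I_def integral_restrict_UNIV by simp
      then show ?thesis unfolding bounded_iff using Ik0 Ib
        by (intro exI[of _ "2 * K"]) auto
    qed
  qed
  have "F integrable_on UNIV"
  proof (rule dominated_convergence(1))
    show "(\<lambda>t. if t \<in> {- real k..real k} then F t else 0) integrable_on UNIV" for k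
      unfolding integrable_restrict_UNIV using intF absolutely_integrable_on_def by blast
    show "(\<lambda>t. norm (F t)) integrable_on UNIV" using mc by blast
    show "norm (if t \<in> {- real k..real k} then F t else 0) \<le> norm (F t)" for k t
      by auto
    show "(\<lambda>k. if t \<in> {- real k..real k} then F t else 0) \<longlonglongrightarrow> F t" for t
    proof (rule tendsto_eventually)
      show "eventually (\<lambda>k. (if t \<in> {- real k..real k} then F t else 0) = F t) sequentially"
        using lim_ev[of t] by eventually_elim simp
    qed
  qed
  then show ?thesis using mc absolutely_integrable_on_def F_def by blast
qed


definition gauss :: "real \<Rightarrow> real \<Rightarrow> real \<Rightarrow> complex" where
  "gauss a b = (\<lambda>t. complex_of_real (exp (- ((a * t - b) ^ 2))))"

lemma gauss_poly_deriv:
  fixes a b t :: real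
  shows "((\<lambda>t. poly p t * exp (- ((a * t - b) ^ 2))) has_real_derivative
     poly (pderiv p + p * [:2 * a * b, - 2 * a * a:]) t * exp (- ((a * t - b) ^ 2))) (at t)"
proof -
  have "((\<lambda>t. poly p t * exp (- ((a * t - b) ^ 2))) has_real_derivative
     poly (pderiv p) t * exp (- ((a * t - b) ^ 2)) +
     poly p t * (exp (- ((a * t - b) ^ 2)) * (- (2 * (a * t - b) * a)))) (at t)"
    by (auto intro!: derivative_eq_intros poly_DERIV simp: power2_eq_square algebra_simps)
  moreover have "poly (pderiv p) t * exp (- ((a * t - b) ^ 2)) +
     poly p t * (exp (- ((a * t - b) ^ 2)) * (- (2 * (a * t - b) * a))) =
     poly (pderiv p + p * [:2 * a * b, - 2 * a * a:]) t * exp (- ((a * t - b) ^ 2))"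
    by (simp add: algebra_simps)
  ultimately show ?thesis by simp
qed

lemma gauss_nderiv:
  fixes a b :: real
  shows "\<exists>p. nderiv n (gauss a b) = (\<lambda>t. complex_of_real (poly p t * exp (- ((a * t - b) ^ 2))))"
proof (induction n)
  case 0
  show ?case by (intro exI[of _ "[:1:]"]) (simp add: gauss_def)
next
  case (Suc n)
  then obtain p where p: "nderiv n (gauss a b) = (\<lambda>t. complex_of_real (poly p t * exp (- ((a * t - b) ^ 2))))"
    by (elim exE)
  have "vector_derivative (nderiv n (gauss a b)) (at t) =
        complex_of_real (poly (pderiv p + p * [:2 * a * b, - 2 * a * a:]) t * exp (- ((a * t - b) ^ 2)))" for t
    unfolding p by (rule vector_derivative_at[OF has_vector_derivative_of_real[OF gauss_poly_deriv]])
  then show ?case unfolding nderiv_Suc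
    by (intro exI[of _ "pderiv p + p * [:2 * a * b, - 2 * a * a:]"]) auto
qed

lemma gauss_decay_mono:
  fixes a b :: real
  assumes "a > 0"
  shows "((\<lambda>t. t ^ m * exp (- ((a * t - b) ^ 2))) \<longlongrightarrow> 0) at_top"
        "((\<lambda>t. t ^ m * exp (- ((a * t - b) ^ 2))) \<longlongrightarrow> 0) at_bot"
proof -
  show "((\<lambda>t. t ^ m * exp (- ((a * t - b) ^ 2))) \<longlongrightarrow> 0) at_top" using assms by real_asymp
  show "((\<lambda>t. t ^ m * exp (- ((a * t - b) ^ 2))) \<longlongrightarrow> 0) at_bot" using assms by real_asymp
qed

lemma gauss_decay_poly:
  fixes a b :: real and p :: "real poly"
  assumes "a > 0" and that: "F = at_top \<or> F = at_bot"
  shows "((\<lambda>t. t ^ m * (poly p t * exp (- ((a * t - b) ^ 2)))) \<longlongrightarrow> 0) F"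
proof -
  have eq: "(\<lambda>t. t ^ m * (poly p t * exp (- ((a * t - b) ^ 2)))) =
            (\<lambda>t. \<Sum>i\<le>degree p. coeff p i * (t ^ (m + i) * exp (- ((a * t - b) ^ 2))))"
    by (simp add: poly_altdef sum_distrib_left sum_distrib_right power_add algebra_simps)
  have "((\<lambda>t. \<Sum>i\<le>degree p. coeff p i * (t ^ (m + i) * exp (- ((a * t - b) ^ 2)))) \<longlongrightarrow>
        (\<Sum>i\<le>degree p. coeff p i * 0)) F"
    using that gauss_decay_mono[OF assms(1)]
    by (intro tendsto_sum tendsto_mult tendsto_const) auto
  then show ?thesis unfolding eq by simp
qed

lemma gauss_Schwartz:
  assumes "a > 0" shows "gauss a b \<in> Schwartz"
  unfolding Schwartz_def
proof (intro CollectI conjI allI)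
  fix n x
  obtain p where p: "nderiv n (gauss a b) = (\<lambda>t. complex_of_real (poly p t * exp (- ((a * t - b) ^ 2))))"
    using gauss_nderiv by blast
  show "nderiv n (gauss a b) differentiable (at x)"
    unfolding p by (rule differentiableI_vector[OF has_vector_derivative_of_real[OF gauss_poly_deriv]])
next
  fix m n
  obtain p where p: "nderiv n (gauss a b) = (\<lambda>t. complex_of_real (poly p t * exp (- ((a * t - b) ^ 2))))"
    using gauss_nderiv by blast
  have eq: "(\<lambda>x. complex_of_real (x ^ m) * nderiv n (gauss a b) x) =
        (\<lambda>x. complex_of_real (x ^ m * (poly p x * exp (- ((a * x - b) ^ 2)))))"
    unfolding p by (simp del: of_real_power)
  show "((\<lambda>x. complex_of_real (x ^ m) * nderiv n (gauss a b) x) \<longlongrightarrow> 0) at_top"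
    unfolding eq using tendsto_of_real[OF gauss_decay_poly[OF assms, of at_top m p b, simplified]] by simp
  show "((\<lambda>x. complex_of_real (x ^ m) * nderiv n (gauss a b) x) \<longlongrightarrow> 0) at_bot"
    unfolding eq using tendsto_of_real[OF gauss_decay_poly[OF assms, of at_bot m p b, simplified]] by simp
qed



lemma lim_local_bound:
  fixes h :: "real \<Rightarrow> complex"
  assumes lp: "(h \<longlongrightarrow> lp) (at_right x)" and lm: "(h \<longlongrightarrow> lm) (at_left x)"
  shows "\<exists>r>0. \<exists>B. \<forall>t. \<bar>t - x\<bar> < r \<longrightarrow> norm (h t) \<le> B"
proof -
  have "eventually (\<lambda>t. dist (h t) lp < 1) (at_right x)"
    using lp by (rule tendstoD) simp
  then obtain b1 where b1: "b1 > x" "\<And>t. t > x \<Longrightarrow> t < b1 \<Longrightarrow> dist (h t) lp < 1"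
    unfolding eventually_at_right_field by (elim exE conjE) auto
  have "eventually (\<lambda>t. dist (h t) lm < 1) (at_left x)"
    using lm by (rule tendstoD) simp
  then obtain b2 where b2: "b2 < x" "\<And>t. t > b2 \<Longrightarrow> t < x \<Longrightarrow> dist (h t) lm < 1"
    unfolding eventually_at_left_field by (elim exE conjE) auto
  define r where "r = min (b1 - x) (x - b2)"
  have "r > 0" using b1 b2 r_def by auto
  moreover have "\<forall>t. \<bar>t - x\<bar> < r \<longrightarrow> norm (h t) \<le> norm lp + norm lm + norm (h x) + 1"
  proof (intro allI impI)
    fix t assume td: "\<bar>t - x\<bar> < r"
    consider "t > x" | "t < x" | "t = x" by linarith
    then show "norm (h t) \<le> norm lp + norm lm + norm (h x) + 1"
    proof cases
      case 1
      then have "t < b1" using td r_def by linarith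
      then have "dist (h t) lp < 1" using b1 1 by auto
      then have "norm (h t) < norm lp + 1" using norm_triangle_ineq2[of "h t" lp]
        by (simp add: dist_norm)
      then show ?thesis by (smt (verit) norm_ge_zero)
    next
      case 2
      then have "t > b2" using td r_def by linarith
      then have "dist (h t) lm < 1" using b2 2 by auto
      then have "norm (h t) < norm lm + 1" using norm_triangle_ineq2[of "h t" lm]
        by (simp add: dist_norm)
      then show ?thesis by (smt (verit) norm_ge_zero)
    next
      case 3 then show ?thesis by (smt (verit) norm_ge_zero)
    qed
  qed
  ultimately show ?thesis by blast
qed

lemma seq_right:
  fixes x s :: real assumes "s > 0"
  shows "filterlim (\<lambda>n. x + s / (real n + 1)) (at_right x) sequentially"
proof (rule tendsto_imp_filterlim_at_right)
  show "((\<lambda>n. x + s / (real n + 1)) \<longlongrightarrow> x) sequentially" by real_asymp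
  show "eventually (\<lambda>n. x + s / (real n + 1) > x) sequentially"
    using assms by (intro always_eventually) simp
qed

lemma seq_left:
  fixes x s :: real assumes "s < 0"
  shows "filterlim (\<lambda>n. x + s / (real n + 1)) (at_left x) sequentially"
proof (rule tendsto_imp_filterlim_at_left)
  show "((\<lambda>n. x + s / (real n + 1)) \<longlongrightarrow> x) sequentially" by real_asymp
  show "eventually (\<lambda>n. x + s / (real n + 1) < x) sequentially"
    using assms by (intro always_eventually) (simp add: divide_neg_pos)
qed

lemma ev_inside:
  fixes d s :: real assumes "d > 0"
  shows "eventually (\<lambda>n. s \<in> {- (d * (real n + 1))<..<d * (real n + 1)}) sequentially"
proof -
  obtain n0 :: nat where n0: "\<bar>s\<bar> / d < real n0" using reals_Archimedean2 by blast
  have "s \<in> {- (d * (real n + 1))<..<d * (real n + 1)}" if "n \<ge> n0" for n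
  proof -
    have "\<bar>s\<bar> < d * real n0" using n0 assms by (simp add: field_simps)
    also have "\<dots> \<le> d * (real n + 1)" using that assms by (intro mult_left_mono) auto
    finally show ?thesis by auto
  qed
  then show ?thesis unfolding eventually_sequentially by blast
qed

lemma affine_sub:
  fixes F :: "real \<Rightarrow> 'b::euclidean_space"
  assumes a: "a > 0" and F: "integrable lebesgue F"
  shows "integrable lebesgue (\<lambda>s. F (x + s / a))"
    "(\<integral>s. F (x + s / a) \<partial>lebesgue) = a *\<^sub>R (\<integral>t. F t \<partial>lebesgue)"
proof -
  have e: "(\<lambda>s. F (x + 1 / a * s)) = (\<lambda>s. F (x + s / a))" by simp
  have "1 / a \<noteq> 0" using a by simp
  from lebesgue_integrable_real_affine[OF F this, of x]
  show "integrable lebesgue (\<lambda>s. F (x + s / a))" unfolding e .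
  have "(\<integral>t. F t \<partial>lebesgue) = \<bar>1 / a\<bar> *\<^sub>R (\<integral>s. F (x + 1 / a * s) \<partial>lebesgue)"
    by (rule lebesgue_integral_real_affine) (use a in simp)
  then have "(\<integral>t. F t \<partial>lebesgue) = (1 / a) *\<^sub>R (\<integral>s. F (x + s / a) \<partial>lebesgue)"
    using a unfolding e by simp
  then show "(\<integral>s. F (x + s / a) \<partial>lebesgue) = a *\<^sub>R (\<integral>t. F t \<partial>lebesgue)"
    using a by simp
qed

lemma tail_ineq:
  fixes a d s :: real
  assumes a: "a \<ge> 1" and d: "d > 0" and s: "d * a \<le> \<bar>s\<bar>"
  shows "exp (- (s ^ 2)) \<le> exp (- (d ^ 2 * (a ^ 2 - 1))) * exp (- ((s / a) ^ 2))"
proof -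
  have a0: "a > 0" using a by simp
  have s2: "(d * a) ^ 2 \<le> s ^ 2"
  proof -
    have "(d * a) ^ 2 \<le> \<bar>s\<bar> ^ 2" using s d a0 by (intro power_mono) auto
    then show ?thesis by simp
  qed
  have q: "0 \<le> 1 - 1 / a ^ 2"
  proof -
    have "1 \<le> a ^ 2" using a by (simp add: one_le_power)
    then have "1 / a ^ 2 \<le> 1" by (simp add: divide_le_eq_1)
    then show ?thesis by simp
  qed
  have "s ^ 2 - (s / a) ^ 2 = s ^ 2 * (1 - 1 / a ^ 2)" by (simp add: power_divide field_simps)
  also have "\<dots> \<ge> (d * a) ^ 2 * (1 - 1 / a ^ 2)" using s2 q by (rule mult_right_mono)
  moreover have "(d * a) ^ 2 * (1 - 1 / a ^ 2) = d ^ 2 * (a ^ 2 - 1)"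
    using a0 by (simp add: field_simps power_mult_distrib)
  ultimately have "d ^ 2 * (a ^ 2 - 1) \<le> s ^ 2 - (s / a) ^ 2" by simp
  then have "- (s ^ 2) \<le> - (d ^ 2 * (a ^ 2 - 1)) + - ((s / a) ^ 2)" by simp
  then have "exp (- (s ^ 2)) \<le> exp (- (d ^ 2 * (a ^ 2 - 1)) + - ((s / a) ^ 2))"
    by (simp only: exp_le_cancel_iff)
  then show ?thesis by (simp only: exp_add)
qed


lemma kernel:
  fixes h :: "real \<Rightarrow> complex" and x :: real
  assumes int: "\<And>a. a > 0 \<Longrightarrow> integrable lebesgue (\<lambda>t. h t * complex_of_real (exp (- ((a * t - a * x) ^ 2))))"
    and zero: "\<And>a. a > 0 \<Longrightarrow> (\<integral>t. h t * complex_of_real (exp (- ((a * t - a * x) ^ 2))) \<partial>lebesgue) = 0"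
    and lp: "(h \<longlongrightarrow> Lp) (at_right x)" and lm: "(h \<longlongrightarrow> Lm) (at_left x)"
  shows "Lp + Lm = 0"
proof -
  define E where "E = (\<lambda>s::real. exp (- (s ^ 2)))"
  define A where "A = (\<lambda>n::nat. real n + 1)"
  have A1: "A n \<ge> 1" for n by (simp add: A_def)
  have A0: "A n > 0" for n by (simp add: A_def)
  define Z where "Z = (\<lambda>a s. h (x + s / a) * complex_of_real (E s))"
  have Zint: "integrable lebesgue (Z a)" and Z0: "(\<integral>s. Z a s \<partial>lebesgue) = 0" if a: "a > 0" for a
  proof -
    let ?F = "\<lambda>t. h t * complex_of_real (exp (- ((a * t - a * x) ^ 2)))"
    have eq: "(\<lambda>s. ?F (x + s / a)) = Z a"
    proof
      fix s
      have "a * (x + s / a) - a * x = s" using a by (simp add: field_simps)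
      then show "?F (x + s / a) = Z a s" by (simp add: Z_def E_def)
    qed
    show "integrable lebesgue (Z a)" using affine_sub(1)[OF a int[OF a], of x] unfolding eq .
    show "(\<integral>s. Z a s \<partial>lebesgue) = 0"
      using affine_sub(2)[OF a int[OF a], of x] zero[OF a] unfolding eq by simp
  qed
  define U where "U = (\<lambda>t. norm (h t) * exp (- ((t - x) ^ 2)))"
  have Uint: "integrable lebesgue U"
  proof -
    have "integrable lebesgue (\<lambda>t. norm (h t * complex_of_real (exp (- ((1 * t - 1 * x) ^ 2)))))"
      using int[of 1] by (intro integrable_norm) simp
    moreover have "(\<lambda>t. norm (h t * complex_of_real (exp (- ((1 * t - 1 * x) ^ 2))))) = U"
      by (rule ext) (simp add: U_def norm_mult)
    ultimately show ?thesis by simp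
  qed
  define K where "K = (\<integral>t. U t \<partial>lebesgue)"
  define W where "W = (\<lambda>a s. norm (h (x + s / a)) * exp (- ((s / a) ^ 2)))"
  have Wint: "integrable lebesgue (W a)" and WK: "(\<integral>s. W a s \<partial>lebesgue) = a * K" if a: "a > 0" for a
  proof -
    have eq: "(\<lambda>s. U (x + s / a)) = W a" by (rule ext) (simp add: U_def W_def)
    show "integrable lebesgue (W a)" using affine_sub(1)[OF a Uint, of x] unfolding eq .
    show "(\<integral>s. W a s \<partial>lebesgue) = a * K"
      using affine_sub(2)[OF a Uint, of x] unfolding eq K_def by simp
  qed
  obtain d M where d: "d > 0" and M: "\<And>t. \<bar>t - x\<bar> < d \<Longrightarrow> norm (h t) \<le> M"
    using lim_local_bound[OF lp lm] by blast
  have M0: "M \<ge> 0" using M[of x] d by (smt (verit) norm_ge_zero)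
  define I where "I = (\<lambda>n. {- (d * A n)<..<d * A n})"
  have Iset: "I n \<in> sets lebesgue" for n by (simp add: I_def)
  have Icset: "- I n \<in> sets lebesgue" for n
  proof -
    have "UNIV - I n \<in> sets lebesgue" by (rule sets.Diff) (simp_all add: I_def)
    then show ?thesis by (simp add: Compl_eq_Diff_UNIV)
  qed
  define Near where "Near = (\<lambda>n s. indicator (I n) s *\<^sub>R Z (A n) s)"
  define Tail where "Tail = (\<lambda>n s. indicator (- I n) s *\<^sub>R Z (A n) s)"
  have Nint: "integrable lebesgue (Near n)" for n
    unfolding Near_def by (rule integrable_mult_indicator[OF Iset Zint[OF A0]])
  have Tint: "integrable lebesgue (Tail n)" for n
    unfolding Tail_def by (rule integrable_mult_indicator[OF Icset Zint[OF A0]])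
  have split: "(\<integral>s. Near n s \<partial>lebesgue) + (\<integral>s. Tail n s \<partial>lebesgue) = 0" for n
  proof -
    have "(\<lambda>s. Near n s + Tail n s) = Z (A n)"
      by (rule ext) (simp add: Near_def Tail_def indicator_def)
    then have "(\<integral>s. Near n s + Tail n s \<partial>lebesgue) = 0" using Z0[OF A0] by simp
    then show ?thesis using Nint[of n] Tint[of n] by simp
  qed
  have Tbound: "norm (\<integral>s. Tail n s \<partial>lebesgue) \<le> exp (- (d ^ 2 * (A n ^ 2 - 1))) * (A n * K)" for n
  proof -
    define e where "e = exp (- (d ^ 2 * (A n ^ 2 - 1)))"
    have "norm (\<integral>s. Tail n s \<partial>lebesgue) \<le> (\<integral>s. norm (Tail n s) \<partial>lebesgue)"
      by (rule integral_norm_bound)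
    also have "\<dots> \<le> (\<integral>s. e * W (A n) s \<partial>lebesgue)"
    proof (rule integral_mono)
      show "integrable lebesgue (\<lambda>s. norm (Tail n s))" using Tint[of n] by (rule integrable_norm)
      show "integrable lebesgue (\<lambda>s. e * W (A n) s)" using Wint[OF A0] by (rule integrable_mult_right)
      fix s
      show "norm (Tail n s) \<le> e * W (A n) s"
      proof (cases "s \<in> I n")
        case True then show ?thesis by (simp add: Tail_def W_def e_def)
      next
        case False
        then have "d * A n \<le> \<bar>s\<bar>" by (auto simp: I_def)
        then have Ee: "E s \<le> e * exp (- ((s / A n) ^ 2))" unfolding E_def e_def by (rule tail_ineq[OF A1 d])
        have "norm (Tail n s) = norm (h (x + s / A n)) * E s"
          using False by (simp add: Tail_def Z_def norm_mult E_def)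
        also have "\<dots> \<le> norm (h (x + s / A n)) * (e * exp (- ((s / A n) ^ 2)))"
          using Ee by (rule mult_left_mono) simp
        also have "\<dots> = e * W (A n) s" by (simp add: W_def)
        finally show ?thesis .
      qed
    qed
    also have "\<dots> = e * (A n * K)" using WK[OF A0] by simp
    finally show ?thesis unfolding e_def .
  qed
  have Tlim: "(\<lambda>n. \<integral>s. Tail n s \<partial>lebesgue) \<longlonglongrightarrow> 0"
  proof (rule Lim_null_comparison)
    show "eventually (\<lambda>n. norm (\<integral>s. Tail n s \<partial>lebesgue) \<le> exp (- (d ^ 2 * (A n ^ 2 - 1))) * (A n * K)) sequentially"
      using Tbound by (intro always_eventually) blast
    have "(\<lambda>n. A n * exp (- (d ^ 2 * (A n ^ 2 - 1)))) \<longlonglongrightarrow> 0" unfolding A_def using d by real_asymp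
    then have "(\<lambda>n. A n * exp (- (d ^ 2 * (A n ^ 2 - 1))) * K) \<longlonglongrightarrow> 0" by (rule tendsto_mult_left_zero)
    then show "(\<lambda>n. exp (- (d ^ 2 * (A n ^ 2 - 1))) * (A n * K)) \<longlonglongrightarrow> 0" by (simp add: mult_ac)
  qed
  have Nlim0: "(\<lambda>n. \<integral>s. Near n s \<partial>lebesgue) \<longlonglongrightarrow> 0"
  proof -
    have "(\<lambda>n. \<integral>s. Near n s \<partial>lebesgue) = (\<lambda>n. - (\<integral>s. Tail n s \<partial>lebesgue))"
      using split by (auto simp: eq_neg_iff_add_eq_0)
    then show ?thesis using tendsto_minus[OF Tlim] by simp
  qed
  define g0 where "g0 = (\<lambda>s::real. indicator {0..} s * E s)"
  define g2 where "g2 = (\<lambda>s::real. indicator {..<0} s * E s)"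
  define g1 where "g1 = (\<lambda>s::real. indicator {0<..} s * E s)"
  have g0_lborel: "has_bochner_integral lborel g0 (sqrt pi / 2)"
    using gaussian_moment_0 by (simp add: g0_def E_def)
  have g0m: "g0 \<in> borel_measurable lborel"
    using integrable.intros[OF g0_lborel] by (rule borel_measurable_integrable)
  have g0int: "integrable lebesgue g0"
    using integrable_completion[OF g0m] integrable.intros[OF g0_lborel] by simp
  have g0I: "(\<integral>s. g0 s \<partial>lebesgue) = sqrt pi / 2"
    using integral_completion[OF g0m] has_bochner_integral_integral_eq[OF g0_lborel] by simp
  have g1int: "integrable lebesgue g1"
  proof -
    have "integrable lebesgue (\<lambda>s. indicator {0<..} s *\<^sub>R g0 s)"
      by (rule integrable_mult_indicator[OF _ g0int]) simp
    moreover have "(\<lambda>s. indicator {0<..} s *\<^sub>R g0 s) = g1"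
      by (rule ext) (simp add: g0_def g1_def indicator_def)
    ultimately show ?thesis by simp
  qed
  have g2eq: "(\<lambda>s. g2 (0 + (-1) * s)) = g1"
    by (rule ext) (simp add: g2_def g1_def E_def indicator_def)
  have g2int: "integrable lebesgue g2"
    using lebesgue_integrable_real_affine_iff[of "-1" g2 0] g1int unfolding g2eq by simp
  have AEne: "AE s in lebesgue. s \<noteq> 0" by (rule AE_completion[OF AE_lborel_singleton])
  have g2I: "(\<integral>s. g2 s \<partial>lebesgue) = sqrt pi / 2"
  proof -
    have "(\<integral>s. g2 s \<partial>lebesgue) = \<bar>-1\<bar> *\<^sub>R (\<integral>s. g2 (0 + (-1) * s) \<partial>lebesgue)"
      by (rule lebesgue_integral_real_affine) simp
    also have "\<dots> = (\<integral>s. g1 s \<partial>lebesgue)" unfolding g2eq by simp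
    also have "\<dots> = (\<integral>s. g0 s \<partial>lebesgue)"
    proof (rule integral_cong_AE)
      show "g1 \<in> borel_measurable lebesgue" using g1int by (rule borel_measurable_integrable)
      show "g0 \<in> borel_measurable lebesgue" using g0int by (rule borel_measurable_integrable)
      show "AE s in lebesgue. g1 s = g0 s"
        using AEne by eventually_elim (simp add: g0_def g1_def indicator_def)
    qed
    finally show ?thesis using g0I by simp
  qed
  have Eint: "integrable lebesgue E"
  proof -
    have "E = (\<lambda>s. g0 s + g2 s)" by (rule ext) (simp add: g0_def g2_def indicator_def)
    then show ?thesis using g0int g2int by simp
  qed
  define P where "P = (\<lambda>s. Lp * complex_of_real (g0 s) + Lm * complex_of_real (g2 s))"
  have i0: "integrable lebesgue (\<lambda>s. Lp * complex_of_real (g0 s))"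
  proof (rule integrable_mult_right)
    show "integrable lebesgue (\<lambda>s. complex_of_real (g0 s))" using g0int by (rule integrable_of_real)
  qed
  have i2: "integrable lebesgue (\<lambda>s. Lm * complex_of_real (g2 s))"
  proof (rule integrable_mult_right)
    show "integrable lebesgue (\<lambda>s. complex_of_real (g2 s))" using g2int by (rule integrable_of_real)
  qed
  have Pint: "integrable lebesgue P"
    unfolding P_def by (rule Bochner_Integration.integrable_add[OF i0 i2])
  have PI: "(\<integral>s. P s \<partial>lebesgue) = (Lp + Lm) * complex_of_real (sqrt pi / 2)"
  proof -
    have "(\<integral>s. P s \<partial>lebesgue) = (\<integral>s. Lp * complex_of_real (g0 s) \<partial>lebesgue) + (\<integral>s. Lm * complex_of_real (g2 s) \<partial>lebesgue)"
      unfolding P_def by (rule Bochner_Integration.integral_add[OF i0 i2])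
    also have "\<dots> = Lp * complex_of_real (sqrt pi / 2) + Lm * complex_of_real (sqrt pi / 2)"
      by (simp only: integral_mult_right_zero integral_complex_of_real g0I g2I)
    finally show ?thesis by (simp only: distrib_right)
  qed
  have DCT: "(\<lambda>n. \<integral>s. Near n s \<partial>lebesgue) \<longlonglongrightarrow> (\<integral>s. P s \<partial>lebesgue)"
  proof (rule integral_dominated_convergence[where w = "\<lambda>s. M * E s"])
    show "P \<in> borel_measurable lebesgue" using Pint by (rule borel_measurable_integrable)
    show "Near n \<in> borel_measurable lebesgue" for n using Nint[of n] by (rule borel_measurable_integrable)
    show "integrable lebesgue (\<lambda>s. M * E s)" using Eint by (rule integrable_mult_right)
    show "AE s in lebesgue. norm (Near n s) \<le> M * E s" for n
    proof (rule AE_I2)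
      fix s show "norm (Near n s) \<le> M * E s"
      proof (cases "s \<in> I n")
        case True
        then have "\<bar>s\<bar> < d * A n" by (auto simp: I_def)
        then have "\<bar>s\<bar> / A n < d" using A0[of n] by (simp add: field_simps)
        then have "\<bar>x + s / A n - x\<bar> < d" using A0[of n] by simp
        then have hb: "norm (h (x + s / A n)) \<le> M" by (rule M)
        have "norm (Near n s) = norm (h (x + s / A n)) * E s"
          using True by (simp add: Near_def Z_def norm_mult E_def)
        also have "\<dots> \<le> M * E s" using hb by (rule mult_right_mono) (simp add: E_def)
        finally show ?thesis .
      next
        case False then show ?thesis using M0 by (simp add: Near_def E_def)
      qed
    qed
    show "AE s in lebesgue. (\<lambda>n. Near n s) \<longlonglongrightarrow> P s"
      using AEne
    proof eventually_elim
      case (elim s)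
      have evI: "eventually (\<lambda>n. Near n s = h (x + s / A n) * complex_of_real (E s)) sequentially"
        using ev_inside[OF d, of s] by eventually_elim (simp add: Near_def Z_def I_def A_def)
      consider "s > 0" | "s < 0" using elim by linarith
      then show ?case
      proof cases
        case 1
        have "(\<lambda>n. h (x + s / A n)) \<longlonglongrightarrow> Lp"
          unfolding A_def by (rule filterlim_compose[OF lp seq_right[OF 1]])
        then have "(\<lambda>n. h (x + s / A n) * complex_of_real (E s)) \<longlonglongrightarrow> Lp * complex_of_real (E s)"
          by (rule tendsto_mult_right)
        moreover have "P s = Lp * complex_of_real (E s)" using 1 by (simp add: P_def g0_def g2_def)
        moreover have "eventually (\<lambda>n. h (x + s / A n) * complex_of_real (E s) = Near n s) sequentially"
          using evI by eventually_elim simp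
        ultimately show ?thesis using Lim_transform_eventually by metis
      next
        case 2
        have "(\<lambda>n. h (x + s / A n)) \<longlonglongrightarrow> Lm"
          unfolding A_def by (rule filterlim_compose[OF lm seq_left[OF 2]])
        then have "(\<lambda>n. h (x + s / A n) * complex_of_real (E s)) \<longlonglongrightarrow> Lm * complex_of_real (E s)"
          by (rule tendsto_mult_right)
        moreover have "P s = Lm * complex_of_real (E s)" using 2 by (simp add: P_def g0_def g2_def)
        moreover have "eventually (\<lambda>n. h (x + s / A n) * complex_of_real (E s) = Near n s) sequentially"
          using evI by eventually_elim simp
        ultimately show ?thesis using Lim_transform_eventually by metis
      qed
    qed
  qed
  have "(\<integral>s. P s \<partial>lebesgue) = 0" using LIMSEQ_unique[OF DCT Nlim0] .
  then have "(Lp + Lm) * complex_of_real (sqrt pi / 2) = 0" using PI by simp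
  moreover have "complex_of_real (sqrt pi / 2) \<noteq> 0" by simp
  ultimately show ?thesis by simp
qed


lemma pcbj_val:
  assumes "f \<in> PC_bj"
  shows "\<exists>lp lm. (f \<longlongrightarrow> lp) (at_right x) \<and> (f \<longlongrightarrow> lm) (at_left x) \<and> f x = (lp + lm) / 2"
proof -
  have pc: "piecewise_cont f" and v: "f x = (Lim (at_right x) f + Lim (at_left x) f) / 2"
    using assms unfolding PC_bj_def by auto
  obtain lp where lp: "(f \<longlongrightarrow> lp) (at_right x)" using pc_right_lim[OF pc, of x] by (elim exE)
  obtain lm where lm: "(f \<longlongrightarrow> lm) (at_left x)" using pc_left_lim[OF pc, of x] by (elim exE)
  have "Lim (at_right x) f = lp" using lp by (rule tendsto_Lim[rotated]) simp
  moreover have "Lim (at_left x) f = lm" using lm by (rule tendsto_Lim[rotated]) simp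
  ultimately show ?thesis using lp lm v by blast
qed

lemma SG_D:
  assumes "f \<in> SG"
  shows "piecewise_cont f" "f \<in> PC_bj"
    "\<exists>C N. \<forall>R>0. integral {-R..R} (\<lambda>x. norm (f x)) \<le> C * (1 + R) ^ N"
  using assms unfolding SG_def PC_bj_def by auto

lemma SG_absint:
  assumes "f \<in> SG" "\<phi> \<in> Schwartz"
  shows "(\<lambda>x. f x * \<phi> x) absolutely_integrable_on UNIV"
proof -
  obtain C N where "\<forall>R>0. integral {-R..R} (\<lambda>x. norm (f x)) \<le> C * (1 + R) ^ N"
    using SG_D(3)[OF assms(1)] by blast
  then show ?thesis using part1_absint[OF SG_D(1)[OF assms(1)] _ assms(2)] by blast
qed

lemma SG_integrable:
  assumes "f \<in> SG" "\<phi> \<in> Schwartz"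
  shows "integrable lebesgue (\<lambda>x. f x * \<phi> x)"
  using SG_absint[OF assms] by (simp add: set_integrable_def)

theorem mainTheorem3:
  shows "(\<forall>f\<in>SG. \<forall>\<phi>\<in>Schwartz.
            piecewise_cont (\<lambda>x. f x * \<phi> x) \<and>
            (\<lambda>x. f x * \<phi> x) absolutely_integrable_on UNIV)
       \<and> (\<forall>f\<in>SG. \<forall>g\<in>SG.
            (\<forall>\<phi>\<in>Schwartz. integral UNIV (\<lambda>x. f x * \<phi> x) = integral UNIV (\<lambda>x. g x * \<phi> x))
            \<longrightarrow> (\<forall>x. f x = g x))"
proof (intro conjI ballI allI impI)
  fix f \<phi> assume f: "f \<in> SG" and phi: "\<phi> \<in> Schwartz"
  show "piecewise_cont (\<lambda>x. f x * \<phi> x)"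
    by (rule pc_mult_cont[OF SG_D(1)[OF f] schwartz_isCont[OF phi]])
  show "(\<lambda>x. f x * \<phi> x) absolutely_integrable_on UNIV" by (rule SG_absint[OF f phi])
next
  fix f g x
  assume f: "f \<in> SG" and g: "g \<in> SG"
    and eq: "\<forall>\<phi>\<in>Schwartz. integral UNIV (\<lambda>x. f x * \<phi> x) = integral UNIV (\<lambda>x. g x * \<phi> x)"
  obtain lpf lmf where lpf: "(f \<longlongrightarrow> lpf) (at_right x)" and lmf: "(f \<longlongrightarrow> lmf) (at_left x)"
    and vf: "f x = (lpf + lmf) / 2" using pcbj_val[OF SG_D(2)[OF f], of x] by blast
  obtain lpg lmg where lpg: "(g \<longlongrightarrow> lpg) (at_right x)" and lmg: "(g \<longlongrightarrow> lmg) (at_left x)"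
    and vg: "g x = (lpg + lmg) / 2" using pcbj_val[OF SG_D(2)[OF g], of x] by blast
  define h where "h = (\<lambda>t. f t - g t)"
  have lph: "(h \<longlongrightarrow> lpf - lpg) (at_right x)" unfolding h_def by (rule tendsto_diff[OF lpf lpg])
  have lmh: "(h \<longlongrightarrow> lmf - lmg) (at_left x)" unfolding h_def by (rule tendsto_diff[OF lmf lmg])
  have hG: "(\<lambda>t. h t * complex_of_real (exp (- ((a * t - a * x) ^ 2)))) =
            (\<lambda>t. f t * gauss a (a * x) t - g t * gauss a (a * x) t)" for a
    by (rule ext) (simp add: h_def gauss_def algebra_simps)
  have int: "integrable lebesgue (\<lambda>t. h t * complex_of_real (exp (- ((a * t - a * x) ^ 2))))"
    if a: "a > 0" for a
  proof -
    have G: "gauss a (a * x) \<in> Schwartz" by (rule gauss_Schwartz[OF a])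
    show ?thesis unfolding hG
      by (rule Bochner_Integration.integrable_diff[OF SG_integrable[OF f G] SG_integrable[OF g G]])
  qed
  have zero: "(\<integral>t. h t * complex_of_real (exp (- ((a * t - a * x) ^ 2))) \<partial>lebesgue) = 0"
    if a: "a > 0" for a
  proof -
    have G: "gauss a (a * x) \<in> Schwartz" by (rule gauss_Schwartz[OF a])
    have fi: "integrable lebesgue (\<lambda>t. f t * gauss a (a * x) t)" by (rule SG_integrable[OF f G])
    have gi: "integrable lebesgue (\<lambda>t. g t * gauss a (a * x) t)" by (rule SG_integrable[OF g G])
    have "(\<integral>t. f t * gauss a (a * x) t \<partial>lebesgue) = (\<integral>t. g t * gauss a (a * x) t \<partial>lebesgue)"
      using eq G integral_lebesgue[OF fi] integral_lebesgue[OF gi] by metis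
    then show ?thesis unfolding hG
      by (simp add: Bochner_Integration.integral_diff[OF fi gi])
  qed
  have "(lpf - lpg) + (lmf - lmg) = 0" by (rule kernel[OF int zero lph lmh])
  then have "lpf + lmf = lpg + lmg" by (simp add: algebra_simps)
  then show "f x = g x" using vf vg by metis
qed

end
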